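(* Let $G$ be a finite group, $\Lambda$ an absolutely irreducible $\mathbb Z[G]$-module of finite rank, $W=\Lambda\otimes\mathbb Q$, $w$ a weight with associated form $(\,,\,)$, $H=\mathrm{Stab}_G(w)$, and let $\{g_1,\dots,g_d\}$ be a set of representatives of the left cosets of $H$ in $G$. Then $(g_iw,g_jw)-(w,w)-1$ is a non-negative integer for all $i\ne j$.
   Context: A weight of $\Lambda$ is $w\in W$ with $gw-w\in\Lambda$ for all $g\in G$. $(\,,\,)$ is the negative definite $G$-invariant symmetric bilinear form on $W$ such that (i) $(w,\lambda)\in\mathbb Z$ for all $\lambda\in\Lambda$, and (ii) every $G$-invariant symmetric bilinear form satisfying (i) is an integer multiple of it. $H=\{g\in G:gw=w\}$. *)

theory Defs
  imports "HOL-Analysis.Finite_Cartesian_Product" "HOL-Algebra.Coset"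
begin

text \<open>A representation of the group G on the lattice Lambda = Z^n is given by
  integer matrices rho g.  W = Lambda (x) Q is rat^'n, Lambda (x) C is complex^'n.\<close>

definition of_int_mat :: "int^'n^'m \<Rightarrow> ('a::ring_1)^'n^'m" where
  "of_int_mat A = (\<chi> i j. of_int (A $ i $ j))"

definition is_int_rep :: "('g, 'b) monoid_scheme \<Rightarrow> ('g \<Rightarrow> int^'n^'n) \<Rightarrow> bool" where
  "is_int_rep G \<rho> \<longleftrightarrow> \<rho> \<one>\<^bsub>G\<^esub> = mat 1 \<and>
     (\<forall>g\<in>carrier G. \<forall>h\<in>carrier G. \<rho> (g \<otimes>\<^bsub>G\<^esub> h) = \<rho> g ** \<rho> h)"

definition lattice :: "(rat^'n) set" where
  "lattice = {v. \<forall>i. v $ i \<in> \<int>}"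

definition complex_subspace :: "(complex^'n) set \<Rightarrow> bool" where
  "complex_subspace S \<longleftrightarrow> 0 \<in> S \<and> (\<forall>x\<in>S. \<forall>y\<in>S. x + y \<in> S) \<and> (\<forall>c. \<forall>x\<in>S. c *s x \<in> S)"

definition abs_irreducible :: "('g, 'b) monoid_scheme \<Rightarrow> ('g \<Rightarrow> int^'n^'n) \<Rightarrow> bool" where
  "abs_irreducible G \<rho> \<longleftrightarrow>
     (\<forall>S. complex_subspace S \<and> (\<forall>g\<in>carrier G. \<forall>v\<in>S. (of_int_mat (\<rho> g) :: complex^'n^'n) *v v \<in> S)
        \<longrightarrow> S = {0} \<or> S = UNIV)"

definition is_weight :: "('g, 'b) monoid_scheme \<Rightarrow> ('g \<Rightarrow> int^'n^'n) \<Rightarrow> rat^'n \<Rightarrow> bool" where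
  "is_weight G \<rho> w \<longleftrightarrow> (\<forall>g\<in>carrier G. (of_int_mat (\<rho> g) :: rat^'n^'n) *v w - w \<in> lattice)"

definition sym_bilinear :: "(rat^'n \<Rightarrow> rat^'n \<Rightarrow> rat) \<Rightarrow> bool" where
  "sym_bilinear B \<longleftrightarrow> (\<forall>x y. B x y = B y x) \<and> (\<forall>x y z. B (x + y) z = B x z + B y z)
     \<and> (\<forall>c x y. B (c *s x) y = c * B x y)"

definition G_invariant_form :: "('g, 'b) monoid_scheme \<Rightarrow> ('g \<Rightarrow> int^'n^'n) \<Rightarrow> (rat^'n \<Rightarrow> rat^'n \<Rightarrow> rat) \<Rightarrow> bool" where
  "G_invariant_form G \<rho> B \<longleftrightarrow> (\<forall>g\<in>carrier G. \<forall>x y.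
     B ((of_int_mat (\<rho> g) :: rat^'n^'n) *v x) ((of_int_mat (\<rho> g) :: rat^'n^'n) *v y) = B x y)"

definition neg_definite :: "(rat^'n \<Rightarrow> rat^'n \<Rightarrow> rat) \<Rightarrow> bool" where
  "neg_definite B \<longleftrightarrow> (\<forall>x. x \<noteq> 0 \<longrightarrow> B x x < 0)"

definition integral_on :: "(rat^'n \<Rightarrow> rat^'n \<Rightarrow> rat) \<Rightarrow> rat^'n \<Rightarrow> bool" where
  "integral_on B w \<longleftrightarrow> (\<forall>l\<in>lattice. B w l \<in> \<int>)"

definition assoc_form :: "('g, 'b) monoid_scheme \<Rightarrow> ('g \<Rightarrow> int^'n^'n) \<Rightarrow> rat^'n \<Rightarrow> (rat^'n \<Rightarrow> rat^'n \<Rightarrow> rat) \<Rightarrow> bool" where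
  "assoc_form G \<rho> w B \<longleftrightarrow> sym_bilinear B \<and> G_invariant_form G \<rho> B \<and> neg_definite B \<and> integral_on B w \<and>
     (\<forall>B'. sym_bilinear B' \<and> G_invariant_form G \<rho> B' \<and> integral_on B' w \<longrightarrow>
        (\<exists>k::int. \<forall>x y. B' x y = of_int k * B x y))"

definition stabilizer :: "('g, 'b) monoid_scheme \<Rightarrow> ('g \<Rightarrow> int^'n^'n) \<Rightarrow> rat^'n \<Rightarrow> 'g set" where
  "stabilizer G \<rho> w = {g\<in>carrier G. (of_int_mat (\<rho> g) :: rat^'n^'n) *v w = w}"

end

theory Submission
  imports Defs
begin

lemma of_int_mat_mult:
  "(of_int_mat (A ** B) :: ('a::comm_ring_1)^_^_) = of_int_mat A ** of_int_mat B"
  by (simp add: of_int_mat_def matrix_matrix_mult_def vec_eq_iff)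

lemma of_int_mat_one: "(of_int_mat (mat 1) :: ('a::comm_ring_1)^_^_) = mat 1"
  by (simp add: of_int_mat_def mat_def vec_eq_iff)

lemma lattice_mult:
  assumes "v \<in> lattice" shows "(of_int_mat A :: rat^'n^'m) *v v \<in> lattice"
  using assms unfolding lattice_def
  by (auto simp: matrix_vector_mult_def of_int_mat_def intro!: Ints_sum Ints_mult)

lemma lattice_diff: "u \<in> lattice \<Longrightarrow> v \<in> lattice \<Longrightarrow> u - v \<in> lattice"
  unfolding lattice_def by (auto intro: Ints_diff)

lemma sb_neg: assumes "sym_bilinear B" shows "B (- x) y = - B x y"
proof -
  have "B ((-1) *s x) y = (-1) * B x y" using assms unfolding sym_bilinear_def by blast
  moreover have "(-1::rat) *s x = - x" by (simp add: vec_eq_iff)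
  ultimately show ?thesis by simp
qed

lemma sb_diff1: assumes "sym_bilinear B" shows "B (x - y) z = B x z - B y z"
proof -
  have "B (x + (- y)) z = B x z + B (-y) z" using assms unfolding sym_bilinear_def by blast
  then show ?thesis using sb_neg[OF assms] by simp
qed

lemma sb_diff2: assumes "sym_bilinear B" shows "B z (x - y) = B z x - B z y"
  using sb_diff1[OF assms] assms unfolding sym_bilinear_def by metis

lemma rep_inv:
  assumes "group G" "is_int_rep G \<rho>" "g \<in> carrier G"
  shows "(of_int_mat (\<rho> (inv\<^bsub>G\<^esub> g)) :: rat^'n^'n) ** of_int_mat (\<rho> g) = mat 1"
proof -
  have "\<rho> (inv\<^bsub>G\<^esub> g \<otimes>\<^bsub>G\<^esub> g) = \<rho> (inv\<^bsub>G\<^esub> g) ** \<rho> g"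
    using assms unfolding is_int_rep_def by (simp add: group.inv_closed)
  moreover have "inv\<^bsub>G\<^esub> g \<otimes>\<^bsub>G\<^esub> g = \<one>\<^bsub>G\<^esub>" using assms by (simp add: group.l_inv)
  ultimately have "\<rho> (inv\<^bsub>G\<^esub> g) ** \<rho> g = mat 1" using assms unfolding is_int_rep_def by simp
  then show ?thesis by (metis of_int_mat_mult of_int_mat_one)
qed

lemma rep_inv_r:
  assumes "group G" "is_int_rep G \<rho>" "g \<in> carrier G"
  shows "(of_int_mat (\<rho> g) :: rat^'n^'n) ** of_int_mat (\<rho> (inv\<^bsub>G\<^esub> g)) = mat 1"
proof -
  interpret group G by fact
  have "\<rho> (g \<otimes>\<^bsub>G\<^esub> inv\<^bsub>G\<^esub> g) = \<rho> g ** \<rho> (inv\<^bsub>G\<^esub> g)"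
    using assms inv_closed unfolding is_int_rep_def by blast
  moreover have "g \<otimes>\<^bsub>G\<^esub> inv\<^bsub>G\<^esub> g = \<one>\<^bsub>G\<^esub>" using assms by simp
  ultimately have "\<rho> g ** \<rho> (inv\<^bsub>G\<^esub> g) = mat 1" using assms unfolding is_int_rep_def by metis
  then show ?thesis by (metis of_int_mat_mult of_int_mat_one)
qed

lemma rep_mult:
  assumes "is_int_rep G \<rho>" "g \<in> carrier G" "h \<in> carrier G"
  shows "(of_int_mat (\<rho> (g \<otimes>\<^bsub>G\<^esub> h)) :: rat^'n^'n) *v x
     = of_int_mat (\<rho> g) *v (of_int_mat (\<rho> h) *v x)"
  using assms unfolding is_int_rep_def by (simp add: of_int_mat_mult matrix_vector_mul_assoc)

lemma coset_sub:
  assumes "group G" "is_int_rep G \<rho>" "g1 \<in> carrier G" "g2 \<in> carrier G"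
    and eq: "(of_int_mat (\<rho> g1) :: rat^'n^'n) *v w = of_int_mat (\<rho> g2) *v w"
  shows "g1 <#\<^bsub>G\<^esub> stabilizer G \<rho> w \<subseteq> g2 <#\<^bsub>G\<^esub> stabilizer G \<rho> w"
proof
  interpret group G by fact
  fix z assume "z \<in> g1 <#\<^bsub>G\<^esub> stabilizer G \<rho> w"
  then obtain h where h: "h \<in> stabilizer G \<rho> w" "z = g1 \<otimes>\<^bsub>G\<^esub> h"
    unfolding l_coset_def by auto
  define x where "x = inv\<^bsub>G\<^esub> g2 \<otimes>\<^bsub>G\<^esub> g1"
  have hc: "h \<in> carrier G" using h unfolding stabilizer_def by auto
  have xc: "x \<in> carrier G" using assms unfolding x_def by simp
  have "(of_int_mat (\<rho> (x \<otimes>\<^bsub>G\<^esub> h)) :: rat^'n^'n) *v w = w"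
  proof -
    have "(of_int_mat (\<rho> (x \<otimes>\<^bsub>G\<^esub> h)) :: rat^'n^'n) *v w
        = of_int_mat (\<rho> (inv\<^bsub>G\<^esub> g2)) *v (of_int_mat (\<rho> g1) *v (of_int_mat (\<rho> h) *v w))"
      using assms hc xc unfolding x_def by (simp add: rep_mult group.inv_closed)
    also have "\<dots> = of_int_mat (\<rho> (inv\<^bsub>G\<^esub> g2)) *v (of_int_mat (\<rho> g2) *v w)"
      using h eq unfolding stabilizer_def by simp
    also have "\<dots> = w" using rep_inv[OF assms(1,2,4)]
      by (simp add: matrix_vector_mul_assoc)
    finally show ?thesis .
  qed
  hence "x \<otimes>\<^bsub>G\<^esub> h \<in> stabilizer G \<rho> w" using xc hc assms(1)
    unfolding stabilizer_def by simp
  moreover have "z = g2 \<otimes>\<^bsub>G\<^esub> (x \<otimes>\<^bsub>G\<^esub> h)"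
    using h assms hc unfolding x_def
    by (simp add: m_assoc[symmetric])
  ultimately show "z \<in> g2 <#\<^bsub>G\<^esub> stabilizer G \<rho> w" unfolding l_coset_def by auto
qed

theorem lemma3p1:
  fixes G :: "('g, 'b) monoid_scheme" and \<rho> :: "'g \<Rightarrow> int^'n^'n"
    and w :: "rat^'n" and B :: "rat^'n \<Rightarrow> rat^'n \<Rightarrow> rat"
  assumes "group G" and "finite (carrier G)"
    and "is_int_rep G \<rho>" and "abs_irreducible G \<rho>"
    and "is_weight G \<rho> w" and "assoc_form G \<rho> w B"
    and "g1 \<in> carrier G" and "g2 \<in> carrier G"
    and "g1 <#\<^bsub>G\<^esub> stabilizer G \<rho> w \<noteq> g2 <#\<^bsub>G\<^esub> stabilizer G \<rho> w"
  shows "B ((of_int_mat (\<rho> g1) :: rat^'n^'n) *v w) ((of_int_mat (\<rho> g2) :: rat^'n^'n) *v w)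
           - B w w - 1 \<in> \<nat>"
proof -
  define M1 where "M1 = (of_int_mat (\<rho> g1) :: rat^'n^'n)"
  define M2 where "M2 = (of_int_mat (\<rho> g2) :: rat^'n^'n)"
  define N where "N = (of_int_mat (\<rho> (inv\<^bsub>G\<^esub> g1)) :: rat^'n^'n)"
  define u where "u = M1 *v w"
  define v where "v = M2 *v w"
  have sb: "sym_bilinear B" and inv: "G_invariant_form G \<rho> B" and nd: "neg_definite B"
    and io: "integral_on B w" using assms(6) unfolding assoc_form_def by auto
  have uv: "u \<noteq> v"
  proof
    assume "u = v"
    hence "g1 <#\<^bsub>G\<^esub> stabilizer G \<rho> w \<subseteq> g2 <#\<^bsub>G\<^esub> stabilizer G \<rho> w"
      "g2 <#\<^bsub>G\<^esub> stabilizer G \<rho> w \<subseteq> g1 <#\<^bsub>G\<^esub> stabilizer G \<rho> w"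
      using coset_sub[OF assms(1,3,7,8)] coset_sub[OF assms(1,3,8,7)]
      unfolding u_def v_def M1_def M2_def by auto
    thus False using assms(9) by auto
  qed
  have uu: "B u u = B w w" using inv assms(7) unfolding G_invariant_form_def u_def M1_def by auto
  have vv: "B v v = B w w" using inv assms(8) unfolding G_invariant_form_def v_def M2_def by auto
  have lat: "v - u \<in> lattice"
  proof -
    have "v - w \<in> lattice" "u - w \<in> lattice" using assms(5,7,8)
      unfolding is_weight_def u_def v_def M1_def M2_def by auto
    then have "(v - w) - (u - w) \<in> lattice" by (rule lattice_diff)
    thus ?thesis by simp
  qed
  have "B u (v - u) = B (M1 *v w) (M1 *v (N *v (v - u)))"
    using rep_inv_r[OF assms(1,3,7)] unfolding u_def M1_def N_def
    by (simp add: matrix_vector_mul_assoc)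
  also have "\<dots> = B w (N *v (v - u))"
    using inv assms(7) unfolding G_invariant_form_def M1_def by auto
  finally have "B u (v - u) \<in> \<int>"
    using io lattice_mult[OF lat] unfolding integral_on_def N_def by auto
  hence ai: "B u v - B w w \<in> \<int>" using sb_diff2[OF sb] uu by simp
  have "B (v - u) (v - u) < 0" using nd uv unfolding neg_definite_def by simp
  moreover have "B (v - u) (v - u) = B v v - B u v - B v u + B u u"
    by (simp add: sb_diff1[OF sb] sb_diff2[OF sb])
  moreover have "B v u = B u v" using sb unfolding sym_bilinear_def by blast
  ultimately have pos: "B u v - B w w > 0" using uu vv by simp
  from ai obtain k where k: "B u v - B w w = of_int k" by (auto elim: Ints_cases)
  with pos have "k \<ge> 1" by simp
  hence "B u v - B w w - 1 = of_nat (nat (k - 1))" using k by simp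
  thus ?thesis unfolding u_def v_def M1_def M2_def by (metis of_nat_in_Nats)
qed

end
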